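(* Let $d\geq 3$, $2\leq k\leq d-1$ and $\theta>0$. If $A\subset\mathbb{R}^d$ has positive reach, $x\in A$, $v_1,\dots,v_k\in\operatorname{Tan}(A,x)\cap S^{d-1}$ and $\Theta(\sigma(0,v_1,\dots,v_k))\geq\theta$, then there exists $\delta>0$ such that any two points $a,b\in B(x,\delta)\cap A$ with $a\neq b$ are $(A,k,2^{-(k+2)}k^{-1}\theta)$-related.
   Context: A set has positive reach if there is $\varepsilon>0$ such that every point at distance less than $\varepsilon$ from it has a unique nearest point in it. $\operatorname{Tan}(A,x)$ is the tangent cone ($u\in\operatorname{Tan}(A,x)$ iff $u=0$ or $r_i(x_i-x)\to u$ for some $x\neq x_i\in A$, $x_i\to x$, $r_i>0$). For $a_0,\dots,a_k\in\mathbb{R}^d$, $\sigma(a_0,\dots,a_k)=\operatorname{conv}\{a_0,\dots,a_k\}$, $|\sigma|$ is its $k$-dimensional volume and (if $\operatorname{diam}\sigma>0$) $\Theta(\sigma)=|\sigma|/(\operatorname{diam}\sigma)^k$. Points $a\neq b$ are $(A,k,\theta')$-related if there exist $z_1,\dots,z_{k-1}\in A$ with $\Theta(\sigma(a,b,z_1,\dots,z_{k-1}))\geq\theta'$. *)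

theory Defs
  imports "HOL-Analysis.Analysis"
begin

definition positive_reach :: "'a::euclidean_space set \<Rightarrow> bool" where
  "positive_reach A \<longleftrightarrow> (\<exists>\<epsilon>>0. \<forall>y. infdist y A < \<epsilon> \<longrightarrow>
      (\<exists>!p. p \<in> A \<and> (\<forall>q\<in>A. dist y p \<le> dist y q)))"

definition Tan :: "'a::euclidean_space set \<Rightarrow> 'a \<Rightarrow> 'a set" where
  "Tan A x = {u. u = 0 \<or> (\<exists>xs r. (\<forall>i. xs i \<in> A \<and> xs i \<noteq> x) \<and> xs \<longlonglongrightarrow> x \<and>
      (\<forall>i. r i > 0) \<and> (\<lambda>i. r i *\<^sub>R (xs i - x)) \<longlonglongrightarrow> u)}"

definition det_nat :: "nat \<Rightarrow> (nat \<Rightarrow> nat \<Rightarrow> real) \<Rightarrow> real" where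
  "det_nat k M = (\<Sum>p | p permutes {..<k}. of_int (sign p) * (\<Prod>i<k. M i (p i)))"

definition simplex_vol :: "nat \<Rightarrow> (nat \<Rightarrow> 'a::euclidean_space) \<Rightarrow> real" where
  "simplex_vol k a = sqrt (det_nat k (\<lambda>i j. (a (Suc i) - a 0) \<bullet> (a (Suc j) - a 0))) / fact k"

definition simplex_diam :: "nat \<Rightarrow> (nat \<Rightarrow> 'a::euclidean_space) \<Rightarrow> real" where
  "simplex_diam k a = diameter (convex hull (a ` {0..k}))"

text \<open>Theta(sigma) = |sigma| / (diam sigma)^k (only meaningful when diam sigma > 0).\<close>
definition Theta :: "nat \<Rightarrow> (nat \<Rightarrow> 'a::euclidean_space) \<Rightarrow> real" where
  "Theta k a = simplex_vol k a / (simplex_diam k a) ^ k"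

definition related :: "'a::euclidean_space set \<Rightarrow> nat \<Rightarrow> real \<Rightarrow> 'a \<Rightarrow> 'a \<Rightarrow> bool" where
  "related A k \<theta>' a b \<longleftrightarrow> a \<noteq> b \<and> (\<exists>z::nat \<Rightarrow> 'a. (\<forall>i\<in>{1..k-1}. z i \<in> A) \<and>
      simplex_diam k (\<lambda>i. if i = 0 then a else if i = 1 then b else z (i - 1)) > 0 \<and>
      Theta k (\<lambda>i. if i = 0 then a else if i = 1 then b else z (i - 1)) \<ge> \<theta>')"

end

theory Submission
  imports Defs "Jordan_Normal_Form.Determinant"
begin

no_notation Matrix.scalar_prod (infix "\<bullet>" 70)


definition gram :: "nat \<Rightarrow> (nat \<Rightarrow> 'a::euclidean_space) \<Rightarrow> real" where
  "gram k u = det_nat k (\<lambda>i j. u i \<bullet> u j)"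

definition gmat :: "nat \<Rightarrow> (nat \<Rightarrow> 'a::euclidean_space) \<Rightarrow> real mat" where
  "gmat k u = Matrix.mat k k (\<lambda>(i,j). u i \<bullet> u j)"

lemma gmat_carrier: "gmat k u \<in> carrier_mat k k" unfolding gmat_def by simp

lemma gram_det: "gram k u = Determinant.det (gmat k u)"
proof -
  have "Determinant.det (gmat k u) = (\<Sum>p \<in> {p. p permutes {0..<k}}. signof p * (\<Prod>i = 0..<k. gmat k u $$ (i, p i)))"
    by (rule det_def'[OF gmat_carrier])
  also have "\<dots> = (\<Sum>p | p permutes {..<k}. of_int (sign p) * (\<Prod>i<k. u i \<bullet> u (p i)))"
  proof (rule sum.cong)
    show "{p. p permutes {0..<k}} = {p. p permutes {..<k}}" by (simp add: atLeast0LessThan)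
  next
    fix p assume "p \<in> {p. p permutes {..<k}}"
    then have p: "p permutes {..<k}" by simp
    have "(\<Prod>i = 0..<k. gmat k u $$ (i, p i)) = (\<Prod>i<k. u i \<bullet> u (p i))"
      unfolding atLeast0LessThan
    proof (rule prod.cong[OF refl])
      fix i assume "i \<in> {..<k}"
      then have "i < k" "p i < k" using permutes_in_image[OF p] by auto
      then show "gmat k u $$ (i, p i) = u i \<bullet> u (p i)" unfolding gmat_def by simp
    qed
    then show "signof p * (\<Prod>i = 0..<k. gmat k u $$ (i, p i)) = of_int (sign p) * (\<Prod>i<k. u i \<bullet> u (p i))"
      by simp
  qed
  finally show ?thesis unfolding gram_def det_nat_def by simp
qed

lemma gram_cong: "(\<And>i. i < k \<Longrightarrow> u i = w i) \<Longrightarrow> gram k u = gram k w"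
  unfolding gram_det gmat_def by (intro arg_cong[where f=Determinant.det] eq_matI) auto

lemma gram_addrow:
  assumes j: "j < k" and m: "m < k" and jm: "j \<noteq> m"
  shows "gram k (u(m := x + c *\<^sub>R u j)) = gram k (u(m := x))"
proof -
  define B where "B = gmat k (u(m := x))"
  have B: "B \<in> carrier_mat k k" unfolding B_def by (rule gmat_carrier)
  define B1 where "B1 = addrow c m j B"
  have B1: "B1 \<in> carrier_mat k k" unfolding B1_def using B by simp
  have eq: "gmat k (u(m := x + c *\<^sub>R u j)) = transpose_mat (addrow c m j (transpose_mat B1))"
  proof (rule eq_matI)
    fix i l assume i: "i < dim_row (transpose_mat (addrow c m j (transpose_mat B1)))"
      and l: "l < dim_col (transpose_mat (addrow c m j (transpose_mat B1)))"
    then have i: "i < k" and l: "l < k" using B1 by auto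
    show "gmat k (u(m := x + c *\<^sub>R u j)) $$ (i, l) = transpose_mat (addrow c m j (transpose_mat B1)) $$ (i, l)"
      using i l j m jm B1 B unfolding B1_def B_def gmat_def
      by (auto simp: inner_add_left inner_add_right algebra_simps inner_commute)
  qed (use B1 in \<open>auto simp: gmat_def\<close>)
  have "gram k (u(m := x + c *\<^sub>R u j)) = Determinant.det (transpose_mat (addrow c m j (transpose_mat B1)))"
    unfolding gram_det eq ..
  also have "\<dots> = Determinant.det (addrow c m j (transpose_mat B1))"
    by (rule det_transpose) (use B1 in simp)
  also have "\<dots> = Determinant.det (transpose_mat B1)"
    by (rule det_addrow[OF j]) (use B1 jm in auto)
  also have "\<dots> = Determinant.det B1" by (rule det_transpose[OF B1])
  also have "\<dots> = Determinant.det B" unfolding B1_def by (rule det_addrow[OF j]) (use B jm in auto)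
  finally show ?thesis unfolding gram_det B_def .
qed

lemma gram_addsum:
  assumes m: "m < k" and S: "S \<subseteq> {..<k} - {m}"
  shows "gram k (u(m := x + (\<Sum>j\<in>S. c j *\<^sub>R u j))) = gram k (u(m := x))"
proof -
  have "finite S" using S finite_subset by blast
  then show ?thesis using S
  proof (induction S arbitrary: x rule: finite_induct)
    case empty then show ?case by simp
  next
    case (insert j S)
    have j: "j < k" "j \<noteq> m" using insert.prems by auto
    have "x + (\<Sum>j\<in>insert j S. c j *\<^sub>R u j) = (x + (\<Sum>j\<in>S. c j *\<^sub>R u j)) + c j *\<^sub>R u j"
      using insert.hyps by (simp add: algebra_simps)
    then have "gram k (u(m := x + (\<Sum>j\<in>insert j S. c j *\<^sub>R u j))) = gram k (u(m := x + (\<Sum>j\<in>S. c j *\<^sub>R u j)))"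
      using gram_addrow[OF j(1) m j(2), of u "x + (\<Sum>j\<in>S. c j *\<^sub>R u j)" "c j"] by (simp add: add.assoc)
    also have "\<dots> = gram k (u(m := x))" by (rule insert.IH) (use insert.prems in blast)
    finally show ?case .
  qed
qed

lemma gram_orth:
  assumes m: "m < k" and orth: "\<And>j. j < k \<Longrightarrow> j \<noteq> m \<Longrightarrow> u m \<bullet> u j = 0"
  shows "gram k u = (u m \<bullet> u m) * gram (k - 1) (\<lambda>i. u (insert_index m i))"
proof -
  let ?A = "gmat k u"
  have A: "?A \<in> carrier_mat k k" by (rule gmat_carrier)
  have "gram k u = (\<Sum>j<k. ?A $$ (m,j) * cofactor ?A m j)"
    unfolding gram_det by (rule laplace_expansion_row[OF A m])
  also have "\<dots> = ?A $$ (m,m) * cofactor ?A m m + (\<Sum>j\<in>{..<k}-{m}. ?A $$ (m,j) * cofactor ?A m j)"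
    by (rule sum.remove) (use m in auto)
  also have "(\<Sum>j\<in>{..<k}-{m}. ?A $$ (m,j) * cofactor ?A m j) = 0"
    by (rule sum.neutral) (auto simp: gmat_def orth m)
  also have "cofactor ?A m m = Determinant.det (mat_delete ?A m m)"
    unfolding cofactor_def by simp
  also have "mat_delete ?A m m = gmat (k - 1) (\<lambda>i. u (insert_index m i))"
    by (rule eq_matI) (auto simp: mat_delete_def gmat_def insert_index_def)
  finally show ?thesis unfolding gram_det using m by (simp add: gmat_def)
qed



lemma span_idx:
  fixes u :: "nat \<Rightarrow> 'a::euclidean_space"
  assumes "p \<in> span (u ` S)" and "finite S"
  shows "\<exists>c. p = (\<Sum>j\<in>S. c j *\<^sub>R u j)"
  using assms(1)
proof (induction rule: span_induct)
  case base
  show ?case unfolding subspace_def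
  proof (intro conjI ballI allI)
    show "0 \<in> {p. \<exists>c. p = (\<Sum>j\<in>S. c j *\<^sub>R u j)}"
      by (auto intro!: exI[of _ "\<lambda>_. 0"])
  next
    fix x y assume "x \<in> {p. \<exists>c. p = (\<Sum>j\<in>S. c j *\<^sub>R u j)}" "y \<in> {p. \<exists>c. p = (\<Sum>j\<in>S. c j *\<^sub>R u j)}"
    then obtain c d where "x = (\<Sum>j\<in>S. c j *\<^sub>R u j)" "y = (\<Sum>j\<in>S. d j *\<^sub>R u j)" by auto
    then show "x + y \<in> {p. \<exists>c. p = (\<Sum>j\<in>S. c j *\<^sub>R u j)}"
      by (auto intro!: exI[of _ "\<lambda>j. c j + d j"] simp: sum.distrib scaleR_add_left)
  next
    fix a :: real and x assume "x \<in> {p. \<exists>c. p = (\<Sum>j\<in>S. c j *\<^sub>R u j)}"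
    then obtain c where "x = (\<Sum>j\<in>S. c j *\<^sub>R u j)" by auto
    then show "a *\<^sub>R x \<in> {p. \<exists>c. p = (\<Sum>j\<in>S. c j *\<^sub>R u j)}"
      by (auto intro!: exI[of _ "\<lambda>j. a * c j"] simp: scaleR_sum_right)
  qed
next
  case (step x)
  then obtain j where j: "j \<in> S" "x = u j" by auto
  have "(\<Sum>i\<in>S. (if i = j then 1 else 0) *\<^sub>R u i) = (\<Sum>i\<in>S. if i = j then u i else 0)"
    by (rule sum.cong) auto
  also have "\<dots> = u j" using j(1) assms(2) by (simp add: sum.delta)
  finally show ?case using j(2) by (intro exI[of _ "\<lambda>i. if i = j then 1 else 0"]) simp
qed

lemma insert_index_lt: "m < k \<Longrightarrow> i < k - 1 \<Longrightarrow> insert_index m i < k"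
  by (auto simp: insert_index_def)

lemma insert_index_ne: "insert_index m i \<noteq> m"
  by (simp add: insert_index_def)

lemma insert_index_image: "m < k \<Longrightarrow> insert_index m ` {..<k-1} = {..<k} - {m}"
proof
  assume m: "m < k"
  show "insert_index m ` {..<k-1} \<subseteq> {..<k} - {m}" using m insert_index_lt insert_index_ne by auto
  show "{..<k} - {m} \<subseteq> insert_index m ` {..<k-1}"
  proof
    fix j assume j: "j \<in> {..<k} - {m}"
    show "j \<in> insert_index m ` {..<k-1}"
    proof (cases "j < m")
      case True then show ?thesis using j m by (intro image_eqI[of _ _ j]) (auto simp: insert_index_def)
    next
      case False
      then have "j > m" using j by auto
      then show ?thesis using j m by (intro image_eqI[of _ _ "j - 1"]) (auto simp: insert_index_def)
    qed
  qed
qed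

lemma gram_del:
  fixes u :: "nat \<Rightarrow> 'a::euclidean_space"
  assumes m: "m < k" and um: "u m = p + r" and p: "p \<in> span (u ` ({..<k} - {m}))"
    and r: "\<And>j. j < k \<Longrightarrow> j \<noteq> m \<Longrightarrow> r \<bullet> u j = 0"
  shows "gram k u = (norm r)^2 * gram (k - 1) (\<lambda>i. u (insert_index m i))"
proof -
  obtain c where c: "p = (\<Sum>j\<in>{..<k} - {m}. c j *\<^sub>R u j)" using span_idx[OF p] by auto
  have "u = u(m := r + (\<Sum>j\<in>{..<k} - {m}. c j *\<^sub>R u j))"
  proof (rule ext)
    fix i show "u i = (u(m := r + (\<Sum>j\<in>{..<k} - {m}. c j *\<^sub>R u j))) i"
      using um c by (cases "i = m") (simp_all add: add.commute)
  qed
  then have "gram k u = gram k (u(m := r + (\<Sum>j\<in>{..<k} - {m}. c j *\<^sub>R u j)))" by simp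
  also have "\<dots> = gram k (u(m := r))" by (rule gram_addsum[OF m]) auto
  also have "\<dots> = (r \<bullet> r) * gram (k - 1) (\<lambda>i. (u(m := r)) (insert_index m i))"
  proof -
    have "gram k (u(m := r)) = ((u(m := r)) m \<bullet> (u(m := r)) m) * gram (k - 1) (\<lambda>i. (u(m := r)) (insert_index m i))"
      by (rule gram_orth[OF m]) (auto simp: r)
    then show ?thesis by simp
  qed
  also have "(\<lambda>i. (u(m := r)) (insert_index m i)) = (\<lambda>i. u (insert_index m i))"
    using insert_index_ne by auto
  finally show ?thesis by (simp add: power2_norm_eq_inner)
qed

lemma gram_zero: "gram 0 u = 1"
  unfolding gram_def det_nat_def by simp

lemma orth_span:
  fixes z :: "'a::euclidean_space"
  assumes "\<And>w. w \<in> span S \<Longrightarrow> real_inner_class.orthogonal z w" "y \<in> S"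
  shows "z \<bullet> y = 0"
  using assms(1)[OF span_base[OF assms(2)]] unfolding real_inner_class.orthogonal_def by simp

lemma gram_nonneg: "gram k u \<ge> 0"
proof (induction k arbitrary: u)
  case 0 then show ?case by (simp add: gram_zero)
next
  case (Suc k)
  obtain p r where pr: "p \<in> span (u ` {..<k})" "\<And>w. w \<in> span (u ` {..<k}) \<Longrightarrow> real_inner_class.orthogonal r w"
    "u k = p + r"
    using orthogonal_subspace_decomp_exists[of "u ` {..<k}" "u k"] by blast
  have "gram (Suc k) u = (norm r)^2 * gram (Suc k - 1) (\<lambda>i. u (insert_index k i))"
  proof (rule gram_del)
    show "p \<in> span (u ` ({..<Suc k} - {k}))" using pr(1) by (simp add: lessThan_Suc)
    fix j assume "j < Suc k" "j \<noteq> k"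
    then show "r \<bullet> u j = 0" using orth_span[OF pr(2)] by auto
  qed (use pr in auto)
  then show ?case using Suc.IH by simp
qed



lemma gram_scale: "gram k (\<lambda>i. c *\<^sub>R u i) = (c^2)^k * gram k u"
proof -
  have "(\<Prod>i<k. (c *\<^sub>R u i) \<bullet> (c *\<^sub>R u (p i))) = (c^2)^k * (\<Prod>i<k. u i \<bullet> u (p i))" for p
  proof -
    have "(\<Prod>i<k. (c *\<^sub>R u i) \<bullet> (c *\<^sub>R u (p i))) = (\<Prod>i<k. c^2 * (u i \<bullet> u (p i)))"
      by (rule prod.cong) (auto simp: power2_eq_square)
    also have "\<dots> = (\<Prod>i<k. c^2) * (\<Prod>i<k. u i \<bullet> u (p i))" by (rule prod.distrib)
    finally show ?thesis by simp
  qed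
  then show ?thesis unfolding gram_def det_nat_def
    by (simp add: sum_distrib_left mult.left_commute)
qed

lemma prod_diff_le:
  fixes a b :: "nat \<Rightarrow> real"
  assumes "finite S" "0 \<le> M" "\<forall>i\<in>S. \<bar>a i\<bar> \<le> M \<and> \<bar>b i\<bar> \<le> M \<and> \<bar>a i - b i\<bar> \<le> d"
  shows "\<bar>prod a S - prod b S\<bar> \<le> real (card S) * M^(card S - 1) * d"
  using assms(1,3)
proof (induction S rule: finite_induct)
  case empty then show ?case by simp
next
  case (insert x F)
  let ?n = "card F"
  have hx: "\<bar>a x\<bar> \<le> M" "\<bar>b x\<bar> \<le> M" "\<bar>a x - b x\<bar> \<le> d" using insert.prems by auto
  have d0: "0 \<le> d" using hx(3) by linarith
  have IH: "\<bar>prod a F - prod b F\<bar> \<le> real ?n * M^(?n - 1) * d" using insert.IH insert.prems by auto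
  have pa: "\<bar>prod a F\<bar> \<le> M^?n"
  proof -
    have "\<bar>prod a F\<bar> = (\<Prod>i\<in>F. \<bar>a i\<bar>)" by (simp add: abs_prod)
    also have "\<dots> \<le> (\<Prod>i\<in>F. M)" by (rule prod_mono) (use insert.prems in auto)
    finally show ?thesis by simp
  qed
  have "prod a (insert x F) - prod b (insert x F) = (a x - b x) * prod a F + b x * (prod a F - prod b F)"
    using insert.hyps by (simp add: algebra_simps)
  then have "\<bar>prod a (insert x F) - prod b (insert x F)\<bar> \<le> \<bar>a x - b x\<bar> * \<bar>prod a F\<bar> + \<bar>b x\<bar> * \<bar>prod a F - prod b F\<bar>"
    by (metis abs_mult abs_triangle_ineq)
  also have "\<dots> \<le> d * M^?n + M * (real ?n * M^(?n - 1) * d)"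
    using hx pa IH d0 assms(2) by (intro add_mono mult_mono) auto
  also have "\<dots> = real (card (insert x F)) * M^(card (insert x F) - 1) * d"
  proof (cases ?n)
    case 0 then show ?thesis using insert.hyps by simp
  next
    case (Suc n') then show ?thesis using insert.hyps by (simp add: algebra_simps)
  qed
  finally show ?case .
qed

lemma gram_perturb:
  fixes u w :: "nat \<Rightarrow> 'a::euclidean_space"
  assumes M: "0 \<le> M" and h: "\<forall>i<k. norm (u i) \<le> M \<and> norm (w i) \<le> M \<and> norm (u i - w i) \<le> d"
  shows "\<bar>gram k u - gram k w\<bar> \<le> fact k * (real k * (M^2)^(k-1) * (2*M*d))"
proof -
  let ?P = "{p. p permutes {..<k}}"
  let ?B = "real k * (M^2)^(k-1) * (2*M*d)"
  have fin: "finite ?P" by (simp add: finite_permutations)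
  have cardP: "card ?P = fact k" using card_permutations[of "{..<k}" k] by simp
  have "gram k u - gram k w = (\<Sum>p\<in>?P. of_int (sign p) * ((\<Prod>i<k. u i \<bullet> u (p i)) - (\<Prod>i<k. w i \<bullet> w (p i))))"
    unfolding gram_def det_nat_def by (simp add: sum_subtractf right_diff_distrib)
  also have "\<bar>\<dots>\<bar> \<le> (\<Sum>p\<in>?P. \<bar>of_int (sign p) * ((\<Prod>i<k. u i \<bullet> u (p i)) - (\<Prod>i<k. w i \<bullet> w (p i)))\<bar>)"
    by (rule sum_abs)
  also have "\<dots> \<le> (\<Sum>p\<in>?P. ?B)"
  proof (rule sum_mono)
    fix p assume "p \<in> ?P"
    then have p: "p permutes {..<k}" by simp
    have sg: "\<bar>(of_int (sign p) :: real)\<bar> = 1" by (simp add: sign_def)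
    have bnd: "\<forall>i\<in>{..<k}. \<bar>u i \<bullet> u (p i)\<bar> \<le> M^2 \<and> \<bar>w i \<bullet> w (p i)\<bar> \<le> M^2 \<and>
        \<bar>u i \<bullet> u (p i) - w i \<bullet> w (p i)\<bar> \<le> 2*M*d"
    proof
      fix i assume "i \<in> {..<k}"
      then have i: "i < k" and pi: "p i < k" using permutes_in_image[OF p] by auto
      have hu: "norm (u i) \<le> M" "norm (u (p i)) \<le> M" "norm (w i) \<le> M" "norm (w (p i)) \<le> M"
        "norm (u i - w i) \<le> d" "norm (u (p i) - w (p i)) \<le> d" using h i pi by auto
      have "\<bar>u i \<bullet> u (p i)\<bar> \<le> norm (u i) * norm (u (p i))" by (rule Cauchy_Schwarz_ineq2)
      also have "\<dots> \<le> M^2" using hu M by (simp add: power2_eq_square mult_mono)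
      finally have b1: "\<bar>u i \<bullet> u (p i)\<bar> \<le> M^2" .
      have "\<bar>w i \<bullet> w (p i)\<bar> \<le> norm (w i) * norm (w (p i))" by (rule Cauchy_Schwarz_ineq2)
      also have "\<dots> \<le> M^2" using hu M by (simp add: power2_eq_square mult_mono)
      finally have b2: "\<bar>w i \<bullet> w (p i)\<bar> \<le> M^2" .
      have "u i \<bullet> u (p i) - w i \<bullet> w (p i) = (u i - w i) \<bullet> u (p i) + w i \<bullet> (u (p i) - w (p i))"
        by (simp add: inner_diff_left inner_diff_right)
      then have "\<bar>u i \<bullet> u (p i) - w i \<bullet> w (p i)\<bar> \<le> \<bar>(u i - w i) \<bullet> u (p i)\<bar> + \<bar>w i \<bullet> (u (p i) - w (p i))\<bar>"
        by simp
      also have "\<dots> \<le> norm (u i - w i) * norm (u (p i)) + norm (w i) * norm (u (p i) - w (p i))"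
        by (intro add_mono Cauchy_Schwarz_ineq2)
      also have "\<dots> \<le> d * M + M * d"
      proof -
        have d0: "0 \<le> d" using hu(5) norm_ge_zero[of "u i - w i"] by linarith
        show ?thesis using hu M d0 by (intro add_mono mult_mono) auto
      qed
      finally have b3: "\<bar>u i \<bullet> u (p i) - w i \<bullet> w (p i)\<bar> \<le> 2*M*d" by simp
      show "\<bar>u i \<bullet> u (p i)\<bar> \<le> M^2 \<and> \<bar>w i \<bullet> w (p i)\<bar> \<le> M^2 \<and>
        \<bar>u i \<bullet> u (p i) - w i \<bullet> w (p i)\<bar> \<le> 2*M*d" using b1 b2 b3 by simp
    qed
    have "\<bar>(\<Prod>i<k. u i \<bullet> u (p i)) - (\<Prod>i<k. w i \<bullet> w (p i))\<bar> \<le> ?B"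
      using prod_diff_le[OF _ _ bnd] M by simp
    then show "\<bar>of_int (sign p) * ((\<Prod>i<k. u i \<bullet> u (p i)) - (\<Prod>i<k. w i \<bullet> w (p i)))\<bar> \<le> ?B"
      by (simp add: abs_mult sg)
  qed
  also have "\<dots> = fact k * ?B" using cardP by simp
  finally show ?thesis .
qed



lemma gram_lower:
  fixes V :: "nat \<Rightarrow> 'a::euclidean_space"
  assumes k: "1 \<le> k" and V: "\<forall>i<k. norm (V i) = 1" and e: "norm e = 1"
  shows "\<exists>m<k. gram k V / (real k)^2 \<le> gram k (\<lambda>i. if i = 0 then e else V (insert_index m (i - 1)))"
proof -
  obtain p eo where pe: "p \<in> span (V ` {..<k})" "\<And>w. w \<in> span (V ` {..<k}) \<Longrightarrow> real_inner_class.orthogonal eo w"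
    "e = p + eo"
    using orthogonal_subspace_decomp_exists[of "V ` {..<k}" e] by blast
  obtain c where c: "p = (\<Sum>j\<in>{..<k}. c j *\<^sub>R V j)" using span_idx[OF pe(1)] by auto
  obtain m where m: "m < k" "\<And>j. j < k \<Longrightarrow> \<bar>c j\<bar> \<le> \<bar>c m\<bar>"
  proof -
    let ?S = "(\<lambda>j. \<bar>c j\<bar>) ` {..<k}"
    have fS: "finite ?S" by simp
    have neS: "?S \<noteq> {}" using k by (auto simp: lessThan_empty_iff)
    have "Max ?S \<in> ?S" using Max_in[OF fS neS] .
    then obtain m where m: "m < k" "\<bar>c m\<bar> = Max ?S" by auto
    have "\<And>j. j < k \<Longrightarrow> \<bar>c j\<bar> \<le> \<bar>c m\<bar>" using Max_ge[OF fS] m(2) by auto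
    then show ?thesis using that m(1) by blast
  qed
  define W where "W = (\<lambda>i. V (insert_index m i))"
  have Wimg: "W ` {..<k-1} = V ` ({..<k} - {m})"
    unfolding W_def using insert_index_image[OF m(1)] by (metis image_image)
  have Wsub: "W ` {..<k-1} \<subseteq> V ` {..<k}" unfolding Wimg by auto
  obtain pm rm where pr: "pm \<in> span (W ` {..<k-1})" "\<And>w. w \<in> span (W ` {..<k-1}) \<Longrightarrow> real_inner_class.orthogonal rm w"
    "V m = pm + rm"
    using orthogonal_subspace_decomp_exists[of "W ` {..<k-1}" "V m"] by blast
  have rmW: "rm \<bullet> W i = 0" if "i < k - 1" for i
    using orth_span[OF pr(2)] that by auto
  have G1: "gram k V = (norm rm)^2 * gram (k-1) W"
    unfolding W_def
  proof (rule gram_del[where u=V, OF m(1) pr(3)])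
    show "pm \<in> span (V ` ({..<k} - {m}))" using pr(1) Wimg by simp
    fix j assume j: "j < k" "j \<noteq> m"
    then have "V j \<in> W ` {..<k-1}" using Wimg by auto
    then show "rm \<bullet> V j = 0" using orth_span[OF pr(2)] by auto
  qed
  define C where "C = (\<lambda>i. if i = 0 then e else V (insert_index m (i - 1)))"
  have CW: "C i = W (i - 1)" if "i \<noteq> 0" for i using that unfolding C_def W_def by simp
  define r' where "r' = c m *\<^sub>R rm + eo"
  define q where "q = c m *\<^sub>R pm + (\<Sum>j\<in>{..<k}-{m}. c j *\<^sub>R V j)"
  have "p = c m *\<^sub>R V m + (\<Sum>j\<in>{..<k}-{m}. c j *\<^sub>R V j)"
    unfolding c by (rule sum.remove) (use m in auto)
  then have eq: "C 0 = q + r'" unfolding C_def q_def r'_def using pe(3) pr(3)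
    by (simp add: algebra_simps)
  have WC: "W ` {..<k-1} \<subseteq> C ` ({..<k} - {0})"
  proof
    fix y assume "y \<in> W ` {..<k-1}"
    then obtain j where j: "j < k - 1" "y = W j" by auto
    then have "y = C (Suc j)" using CW[of "Suc j"] by simp
    then show "y \<in> C ` ({..<k} - {0})" using j by auto
  qed
  have qspan: "q \<in> span (C ` ({..<k} - {0}))"
  proof -
    have "q \<in> span (W ` {..<k-1})" unfolding q_def
    proof (intro span_add span_scale span_sum)
      show "pm \<in> span (W ` {..<k-1})" by (rule pr(1))
      fix j assume "j \<in> {..<k} - {m}"
      then have "V j \<in> W ` {..<k-1}" using Wimg by auto
      then show "V j \<in> span (W ` {..<k-1})" by (rule span_base)
    qed
    then show ?thesis using span_mono[OF WC] by auto
  qed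
  have eoV: "eo \<bullet> V i = 0" if "i < k" for i using orth_span[OF pe(2)] that by auto
  have orthC: "r' \<bullet> C j = 0" if "j < k" "j \<noteq> 0" for j
  proof -
    have j1: "j - 1 < k - 1" using that by simp
    have "C j = V (insert_index m (j - 1))" using CW[OF that(2)] unfolding W_def by simp
    moreover have "insert_index m (j - 1) < k" using insert_index_lt[OF m(1) j1] .
    ultimately have "eo \<bullet> C j = 0" using eoV by simp
    moreover have "rm \<bullet> C j = 0" using rmW[OF j1] CW[OF that(2)] by simp
    ultimately show ?thesis unfolding r'_def by (simp add: inner_add_left)
  qed
  have G2: "gram k C = (norm r')^2 * gram (k-1) (\<lambda>i. C (insert_index 0 i))"
    by (rule gram_del[where u=C and m=0, OF _ eq qspan]) (use k orthC in auto)
  have "(\<lambda>i. C (insert_index 0 i)) = W" using CW by (auto simp: insert_index_def)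
  then have G2': "gram k C = (norm r')^2 * gram (k-1) W" using G2 by simp
  have rm_span: "rm \<in> span (V ` {..<k})"
  proof -
    have "pm \<in> span (V ` {..<k})" using pr(1) span_mono[OF Wsub] by auto
    moreover have "V m \<in> span (V ` {..<k})" using m(1) by (intro span_base) auto
    ultimately have "V m - pm \<in> span (V ` {..<k})" by (intro span_diff)
    then show ?thesis using pr(3) by (simp add: algebra_simps)
  qed
  have rmeo: "eo \<bullet> rm = 0" using pe(2)[OF rm_span] unfolding real_inner_class.orthogonal_def .
  have rmpm: "rm \<bullet> pm = 0" using pr(2)[OF pr(1)] unfolding real_inner_class.orthogonal_def .
  have peo: "eo \<bullet> p = 0" using pe(2)[OF pe(1)] unfolding real_inner_class.orthogonal_def .
  have nr': "(norm r')^2 = (c m)^2 * (norm rm)^2 + (norm eo)^2"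
    unfolding r'_def power2_norm_eq_inner using rmeo
    by (simp add: inner_add_left inner_add_right inner_commute power2_eq_square algebra_simps)
  have "1 = (norm (V m))^2" using V m(1) by simp
  also have "\<dots> = (norm pm)^2 + (norm rm)^2" unfolding pr(3) power2_norm_eq_inner using rmpm
    by (simp add: inner_add_left inner_add_right inner_commute)
  finally have rm1: "(norm rm)^2 \<le> 1" using zero_le_power2[of "norm pm"] by linarith
  have "1 = (norm e)^2" using e by simp
  also have "\<dots> = (norm p)^2 + (norm eo)^2" unfolding pe(3) power2_norm_eq_inner using peo
    by (simp add: inner_add_left inner_add_right inner_commute)
  finally have PE: "(norm p)^2 + (norm eo)^2 = 1" by simp
  have "norm p \<le> (\<Sum>j\<in>{..<k}. norm (c j *\<^sub>R V j))" unfolding c by (rule norm_sum)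
  also have "\<dots> \<le> (\<Sum>j\<in>{..<k}. \<bar>c m\<bar>)" using V m(2) by (intro sum_mono) auto
  also have "\<dots> = real k * \<bar>c m\<bar>" by simp
  finally have np: "norm p \<le> real k * \<bar>c m\<bar>" .
  have np2: "(norm p)^2 \<le> (real k)^2 * (c m)^2"
  proof -
    have "(norm p)^2 \<le> (real k * \<bar>c m\<bar>)^2" by (rule power_mono[OF np norm_ge_zero])
    then show ?thesis by (simp add: power_mult_distrib)
  qed
  define \<rho> where "\<rho> = (norm rm)^2"
  define E where "E = (norm eo)^2"
  define G where "G = gram (k-1) W"
  have G0: "0 \<le> G" unfolding G_def by (rule gram_nonneg)
  have rho0: "0 \<le> \<rho>" "\<rho> \<le> 1" using rm1 unfolding \<rho>_def by auto
  have E0: "0 \<le> E" unfolding E_def by simp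
  have k2: "(real k)^2 \<ge> 1" using k by simp
  have key: "\<rho> / (real k)^2 \<le> (c m)^2 * \<rho> + E"
  proof -
    have "\<rho> / (real k)^2 = \<rho> * (norm p)^2 / (real k)^2 + \<rho> * E / (real k)^2"
      using PE unfolding E_def by (simp add: add_divide_distrib[symmetric] distrib_left[symmetric])
    also have "\<rho> * (norm p)^2 / (real k)^2 \<le> \<rho> * (c m)^2"
    proof -
      have "\<rho> * (norm p)^2 \<le> \<rho> * ((real k)^2 * (c m)^2)" using np2 rho0 by (simp add: mult_left_mono)
      then show ?thesis using k2 k by (simp add: divide_le_eq algebra_simps)
    qed
    also have "\<rho> * E / (real k)^2 \<le> E"
    proof -
      have "\<rho> * E \<le> E" using rho0 E0 by (simp add: mult_left_le_one_le)
      also have "E \<le> E * (real k)^2" using E0 k2 by (simp add: mult_le_cancel_left1)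
      finally show ?thesis using k2 k by (simp add: divide_le_eq)
    qed
    finally show ?thesis by (simp add: mult.commute)
  qed
  have "gram k V / (real k)^2 = (\<rho> / (real k)^2) * G" using G1 unfolding \<rho>_def G_def by simp
  also have "\<dots> \<le> ((c m)^2 * \<rho> + E) * G" using key G0 by (rule mult_right_mono)
  also have "\<dots> = gram k C" using G2' nr' unfolding \<rho>_def E_def G_def by simp
  finally show ?thesis using m(1) unfolding C_def by blast
qed



locale preach =
  fixes A :: "'a::euclidean_space set" and R :: real
  assumes R_pos: "R > 0"
    and uniq: "\<And>y. infdist y A < R \<Longrightarrow> \<exists>!p. p \<in> A \<and> (\<forall>q\<in>A. dist y p \<le> dist y q)"
begin

definition np :: "'a \<Rightarrow> 'a" where
  "np y = (THE p. p \<in> A \<and> (\<forall>q\<in>A. dist y p \<le> dist y q))"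

lemma A_ne: "A \<noteq> {}"
proof
  assume "A = {}"
  then have "infdist 0 A < R" using R_pos by (simp add: infdist_def)
  from uniq[OF this] show False using \<open>A = {}\<close> by auto
qed

lemma infdist_nearest: "p \<in> A \<Longrightarrow> \<forall>q\<in>A. dist y p \<le> dist y q \<Longrightarrow> infdist y A = dist y p"
proof -
  assume p: "p \<in> A" and h: "\<forall>q\<in>A. dist y p \<le> dist y q"
  have "infdist y A \<le> dist y p" using infdist_le[OF p] .
  moreover have "dist y p \<le> infdist y A"
    unfolding infdist_def using p h by (auto intro!: cINF_greatest)
  ultimately show ?thesis by simp
qed

lemma np: assumes "infdist y A < R"
  shows "np y \<in> A" "\<forall>q\<in>A. dist y (np y) \<le> dist y q"
  using theI'[OF uniq[OF assms]] unfolding np_def by auto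

lemma np_unique: assumes "infdist y A < R" "p \<in> A" "\<forall>q\<in>A. dist y p \<le> dist y q"
  shows "np y = p"
  using uniq[OF assms(1)] np[OF assms(1)] assms(2,3) by blast

lemma dist_np: "infdist y A < R \<Longrightarrow> dist y (np y) = infdist y A"
  using infdist_nearest np by metis

lemma closedA: "closed A"
proof -
  have "closure A \<subseteq> A"
  proof
    fix y assume y: "y \<in> closure A"
    then have z: "infdist y A = 0" using in_closure_iff_infdist_zero A_ne by auto
    then have yU: "infdist y A < R" using R_pos by simp
    then have "dist y (np y) = 0" using dist_np z by simp
    then show "y \<in> A" using np(1)[OF yU] by simp
  qed
  then show ?thesis using closure_subset_eq by blast
qed

lemma np_self: "y \<in> A \<Longrightarrow> np y = y"
  using np_unique[of y y] R_pos by (simp add: infdist_zero)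

lemma open_U: "open {y. infdist y A < R}"
  by (rule open_Collect_less) (auto intro!: continuous_on_infdist continuous_on_id)

lemma np_cont: "continuous_on {y. infdist y A < R} np"
  unfolding continuous_on_iff
proof (intro ballI allI impI)
  fix y and e :: real assume "y \<in> {y. infdist y A < R}" and e: "0 < e"
  then have y: "infdist y A < R" by simp
  define \<rho> where "\<rho> = infdist y A"
  define K where "K = A \<inter> cball y (\<rho> + 1) \<inter> - ball (np y) e"
  have cK: "compact K" unfolding K_def
    by (intro closed_Int_compact compact_Int_closed closedA compact_cball) auto
  have gap: "\<exists>g>0. \<forall>p\<in>K. \<rho> + g \<le> dist y p"
  proof (cases "K = {}")
    case True then show ?thesis by (intro exI[of _ 1]) auto
  next
    case False
    have cd: "continuous_on K (\<lambda>p. dist y p)" by (intro continuous_intros)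
    obtain p0 where p0: "p0 \<in> K" "\<forall>p\<in>K. dist y p0 \<le> dist y p"
      using continuous_attains_inf[OF cK False cd] by blast
    have p0A: "p0 \<in> A" and p0ne: "p0 \<noteq> np y" using p0(1) e unfolding K_def by auto
    have "\<rho> \<le> dist y p0" unfolding \<rho>_def by (rule infdist_le[OF p0A])
    moreover have "\<rho> \<noteq> dist y p0"
    proof
      assume eq: "\<rho> = dist y p0"
      have "\<forall>q\<in>A. dist y p0 \<le> dist y q" using eq infdist_le unfolding \<rho>_def by metis
      then have "np y = p0" using np_unique[OF y p0A] by simp
      then show False using p0ne by simp
    qed
    ultimately have "\<rho> < dist y p0" by simp
    then show ?thesis using p0(2) by (intro exI[of _ "dist y p0 - \<rho>"]) auto
  qed
  then obtain g where g: "g > 0" "\<forall>p\<in>K. \<rho> + g \<le> dist y p" by blast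
  show "\<exists>d>0. \<forall>y'\<in>{y. infdist y A < R}. dist y' y < d \<longrightarrow> dist (np y') (np y) < e"
  proof (intro exI[of _ "min (1/2) (g/2)"] conjI ballI impI)
    show "0 < min (1/2) (g/2)" using g by simp
    fix y' assume y': "y' \<in> {y. infdist y A < R}" and d: "dist y' y < min (1/2) (g/2)"
    then have y'U: "infdist y' A < R" by simp
    have "dist y (np y') \<le> dist y y' + dist y' (np y')" by (rule dist_triangle)
    also have "dist y' (np y') = infdist y' A" using dist_np[OF y'U] .
    also have "infdist y' A \<le> infdist y A + dist y' y" by (rule infdist_triangle)
    finally have "dist y (np y') \<le> \<rho> + 2 * dist y' y" unfolding \<rho>_def
      by (simp add: dist_commute)
    moreover have "dist y' y < 1/2" "dist y' y < g/2" using d by auto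
    ultimately have lt: "dist y (np y') < \<rho> + g" "dist y (np y') \<le> \<rho> + 1" by auto
    show "dist (np y') (np y) < e"
    proof (rule ccontr)
      assume "\<not> dist (np y') (np y) < e"
      then have "np y' \<in> K" unfolding K_def using np(1)[OF y'U] lt(2)
        by (auto simp: dist_commute)
      then show False using g(2) lt(1) by force
    qed
  qed
qed

lemma np_segment: assumes y: "infdist y A < R" and t: "0 \<le> t" "t \<le> 1"
  shows "np (np y + t *\<^sub>R (y - np y)) = np y" "infdist (np y + t *\<^sub>R (y - np y)) A < R"
proof -
  let ?c = "np y" let ?b = "?c + t *\<^sub>R (y - ?c)"
  have e1: "y - ?b = (1 - t) *\<^sub>R (y - ?c)" by (simp add: algebra_simps)
  have e2: "?b - ?c = t *\<^sub>R (y - ?c)" by simp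
  have d1: "dist y ?b = (1 - t) * dist y ?c" using e1 t by (simp add: dist_norm)
  have d2: "dist ?b ?c = t * dist y ?c" using e2 t by (simp add: dist_norm dist_commute norm_minus_commute)
  have near: "\<forall>q\<in>A. dist ?b ?c \<le> dist ?b q"
  proof
    fix q assume q: "q \<in> A"
    have "dist y ?c \<le> dist y q" using np(2)[OF y] q by auto
    moreover have "dist y q \<le> dist y ?b + dist ?b q" by (rule dist_triangle)
    ultimately show "dist ?b ?c \<le> dist ?b q" using d1 d2 by (simp add: algebra_simps)
  qed
  have "infdist ?b A \<le> dist ?b ?c" by (rule infdist_le[OF np(1)[OF y]])
  also have "\<dots> \<le> dist y ?c" using d2 t by (simp add: mult_left_le_one_le)
  also have "\<dots> = infdist y A" using dist_np[OF y] .
  finally show bU: "infdist ?b A < R" using y by simp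
  show "np ?b = ?c" using np_unique[OF bU np(1)[OF y] near] .
qed


lemma np_ray:
  assumes c: "c \<in> A" and n: "norm n = 1" and t0: "0 < t0" "t0 < R"
    and h: "np (c + t0 *\<^sub>R n) = c" and t: "0 \<le> t" "t < R"
  shows "np (c + t *\<^sub>R n) = c"
proof -
  define T where "T = {t. 0 \<le> t \<and> t < R \<and> np (c + t *\<^sub>R n) = c}"
  have infd: "infdist (c + s *\<^sub>R n) A \<le> s" if "0 \<le> s" for s
    using infdist_le[OF c, of "c + s *\<^sub>R n"] n that by (simp add: dist_norm)
  have down: "s \<in> T" if st: "t' \<in> T" "0 \<le> s" "s \<le> t'" for s t'
  proof (cases "t' = 0")
    case True
    then have "s = 0" using st by simp
    then show ?thesis using np_self[OF c] R_pos unfolding T_def by simp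
  next
    case False
    then have t'pos: "t' > 0" using st unfolding T_def by simp
    let ?y = "c + t' *\<^sub>R n"
    have yU: "infdist ?y A < R" using infd[of t'] st unfolding T_def by simp
    have npy: "np ?y = c" using st unfolding T_def by simp
    have "np (np ?y + (s/t') *\<^sub>R (?y - np ?y)) = np ?y"
      using np_segment(1)[OF yU, of "s/t'"] st t'pos by simp
    moreover have "np ?y + (s/t') *\<^sub>R (?y - np ?y) = c + s *\<^sub>R n"
      using t'pos by (simp add: npy)
    ultimately show ?thesis using st npy t'pos unfolding T_def by simp
  qed
  have t0T: "t0 \<in> T" using t0 h unfolding T_def by simp
  have bdd: "bdd_above T" unfolding T_def by (rule bdd_aboveI[of _ R]) auto
  define \<tau> where "\<tau> = Sup T"
  have tau_ge: "t0 \<le> \<tau>" unfolding \<tau>_def by (rule cSup_upper[OF t0T bdd])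
  have tauR: "R \<le> \<tau>"
  proof (rule ccontr)
    assume "\<not> R \<le> \<tau>"
    hence tauR: "\<tau> < R" by simp
    let ?b = "c + \<tau> *\<^sub>R n"
    have dbc: "dist ?b c = \<tau>" using n tau_ge t0 by (simp add: dist_norm)
    have near: "\<forall>q\<in>A. dist ?b c \<le> dist ?b q"
    proof
      fix q assume q: "q \<in> A"
      have "\<tau> - 2*\<epsilon> \<le> dist ?b q" if ep: "\<epsilon> > 0" for \<epsilon>
      proof -
        obtain t where tT: "t \<in> T" and tgt: "\<tau> - \<epsilon> < t"
          using less_cSupE[of "\<tau> - \<epsilon>" T] t0T ep unfolding \<tau>_def by auto
        have tle: "t \<le> \<tau>" unfolding \<tau>_def by (rule cSup_upper[OF tT bdd])
        have t0': "0 \<le> t" using tT unfolding T_def by simp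
        have yU: "infdist (c + t *\<^sub>R n) A < R" using infd[OF t0'] tT unfolding T_def by simp
        have "dist (c + t *\<^sub>R n) c \<le> dist (c + t *\<^sub>R n) q"
          using np(2)[OF yU] q tT unfolding T_def by auto
        moreover have "dist (c + t *\<^sub>R n) c = t" using n t0' by (simp add: dist_norm)
        moreover have "dist (c + t *\<^sub>R n) q \<le> dist (c + t *\<^sub>R n) ?b + dist ?b q"
          by (rule dist_triangle)
        moreover have "dist (c + t *\<^sub>R n) ?b = \<tau> - t"
        proof -
          have "(c + t *\<^sub>R n) - ?b = (t - \<tau>) *\<^sub>R n" by (simp add: algebra_simps)
          then show ?thesis using n tle by (simp add: dist_norm)
        qed
        ultimately show ?thesis using tgt by linarith
      qed
      then have "\<tau> \<le> dist ?b q + e" if "e > 0" for e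
        using that by (metis diff_le_eq half_gt_zero field_sum_of_halves mult_2 add.commute)
      then have "\<tau> \<le> dist ?b q" by (rule field_le_epsilon)
      then show "dist ?b c \<le> dist ?b q" using dbc by simp
    qed
    have bU: "infdist ?b A < R" using infd[of \<tau>] tau_ge t0 tauR by simp
    have npb: "np ?b = c" using np_unique[OF bU c near] .
    have infb: "infdist ?b A = \<tau>" using dist_np[OF bU] npb dbc by simp
    obtain r where r: "r > 0" "cball ?b r \<subseteq> {y. infdist y A < R}"
      using open_U bU open_contains_cball by blast
    define r' where "r' = min r (min (\<tau>/4) ((R - \<tau>)/2))"
    have r'pos: "r' > 0" using r tau_ge t0 tauR unfolding r'_def by simp
    have r'sub: "cball ?b r' \<subseteq> {y. infdist y A < R}"
      proof -
      have "cball ?b r' \<subseteq> cball ?b r" by (rule subset_cball) (simp add: r'_def)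
      then show ?thesis using r(2) by blast
    qed
    have r'tau: "r' \<le> \<tau>/4" "\<tau> + r' < R"
    proof -
      have "r' \<le> \<tau>/4" "r' \<le> (R - \<tau>)/2" unfolding r'_def by (auto simp: min_def)
      then show "r' \<le> \<tau>/4" "\<tau> + r' < R" using tauR by auto
    qed
    have zfar: "\<tau> - r' \<le> infdist z A" if "z \<in> cball ?b r'" for z
    proof -
      have "infdist ?b A \<le> infdist z A + dist ?b z" by (rule infdist_triangle)
      then show ?thesis using that infb by (simp add: dist_commute)
    qed
    have zU: "infdist z A < R" if "z \<in> cball ?b r'" for z using r'sub that by auto
    have nz: "norm (z - np z) > 0" if "z \<in> cball ?b r'" for z
    proof -
      have "norm (z - np z) = infdist z A" using dist_np[OF zU[OF that]] by (simp add: dist_norm)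
      then show ?thesis using zfar[OF that] r'tau tau_ge t0 by simp
    qed
    define f where "f z = ?b + r' *\<^sub>R (inverse (norm (z - np z)) *\<^sub>R (z - np z))" for z
    have contf: "continuous_on (cball ?b r') f"
    proof -
      have cp: "continuous_on (cball ?b r') np" using continuous_on_subset[OF np_cont r'sub] .
      show ?thesis unfolding f_def
        using nz by (intro continuous_intros cp) auto
    qed
    have maps: "f \<in> cball ?b r' \<rightarrow> cball ?b r'"
    proof
      fix z assume z: "z \<in> cball ?b r'"
      have "dist ?b (f z) = r'" using nz[OF z] r'pos unfolding f_def
        by (simp add: dist_norm)
      then show "f z \<in> cball ?b r'" by simp
    qed
    obtain z where z: "z \<in> cball ?b r'" "f z = z"
      using brouwer_ball[OF r'pos contf maps] by blast
    define p where "p = np z"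
    define \<rho> where "\<rho> = norm (z - p)"
    define w where "w = inverse \<rho> *\<^sub>R (z - p)"
    have rho: "\<rho> = infdist z A" using dist_np[OF zU[OF z(1)]] unfolding \<rho>_def p_def by (simp add: dist_norm)
    have rhobig: "\<rho> \<ge> \<tau> - r'" using zfar[OF z(1)] rho by simp
    have rhopos: "\<rho> > 0" using rhobig r'tau tau_ge t0 by simp
    have zeq: "z = ?b + r' *\<^sub>R w" using z(2) unfolding f_def w_def \<rho>_def p_def by simp
    have zp: "z - p = \<rho> *\<^sub>R w" using rhopos unfolding w_def by simp
    have nw: "norm w = 1" using rhopos unfolding w_def \<rho>_def by simp
    have beq: "?b = p + ((\<rho> - r') / \<rho>) *\<^sub>R (z - p)"
    proof -
      have "?b = z - r' *\<^sub>R w" using zeq by simp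
      also have "\<dots> = p + (\<rho> - r') *\<^sub>R w" using zp by (simp add: algebra_simps)
      also have "\<dots> = p + ((\<rho> - r') / \<rho>) *\<^sub>R (z - p)" using zp rhopos by simp
      finally show ?thesis .
    qed
    have "np ?b = p"
      using np_segment(1)[OF zU[OF z(1)], of "(\<rho> - r') / \<rho>"] beq rhopos rhobig r'tau r'pos
      unfolding p_def by simp
    then have pc: "p = c" using npb by simp
    have "\<tau> *\<^sub>R n = (\<rho> - r') *\<^sub>R w"
    proof -
      have "?b - c = z - r' *\<^sub>R w - p" using zeq pc by simp
      also have "\<dots> = (\<rho> - r') *\<^sub>R w" using zp by (simp add: algebra_simps)
      finally show ?thesis by simp
    qed
    moreover have "\<tau> = \<rho> - r'"
    proof -
      have "norm (\<tau> *\<^sub>R n) = norm ((\<rho> - r') *\<^sub>R w)" using calculation by simp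
      then show ?thesis using n nw tau_ge t0 rhobig r'tau by simp
    qed
    ultimately have wn: "w = n" using tau_ge t0 by simp
    have "z = c + (\<tau> + r') *\<^sub>R n" using zeq wn by (simp add: algebra_simps)
    then have "np (c + (\<tau> + r') *\<^sub>R n) = c" using pc unfolding p_def by simp
    then have "\<tau> + r' \<in> T" unfolding T_def using r'tau r'pos tau_ge t0 by simp
    then have "\<tau> + r' \<le> \<tau>" unfolding \<tau>_def by (rule cSup_upper[OF _ bdd])
    then show False using r'pos by simp
  qed
  have "t < \<tau>" using t tauR by simp
  then obtain t' where "t' \<in> T" "t < t'" using less_cSupE[of t T] t0T unfolding \<tau>_def by auto
  then have "t \<in> T" using down t by simp
  then show ?thesis unfolding T_def by simp
qed

end

context preach begin

lemma normal_ineq: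
  assumes c: "c \<in> A" and n: "norm n = 1" and t0: "0 < t0" "t0 < R"
    and h: "np (c + t0 *\<^sub>R n) = c" and q: "q \<in> A"
  shows "(q - c) \<bullet> n * (2*R) \<le> (norm (q - c))^2"
proof -
  have nn: "n \<bullet> n = 1" using n by (metis power2_norm_eq_inner power_one)
  have key: "2 * t * ((q - c) \<bullet> n) \<le> (norm (q - c))^2" if t: "0 \<le> t" "t < R" for t
  proof -
    have ray: "np (c + t *\<^sub>R n) = c" using np_ray[OF c n t0 h t] .
    have yU: "infdist (c + t *\<^sub>R n) A < R"
      using infdist_le[OF c, of "c + t *\<^sub>R n"] n t by (simp add: dist_norm)
    have "dist (c + t *\<^sub>R n) c \<le> dist (c + t *\<^sub>R n) q" using np(2)[OF yU] q ray by auto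
    then have "t \<le> norm ((c - q) + t *\<^sub>R n)" using n t by (simp add: dist_norm algebra_simps)
    then have "t^2 \<le> (norm ((c - q) + t *\<^sub>R n))^2" using t by (simp add: power_mono)
    also have "\<dots> = (norm (q - c))^2 - 2 * t * ((q - c) \<bullet> n) + t^2"
      unfolding power2_norm_eq_inner by (simp add: power2_norm_eq_inner inner_add_left inner_add_right inner_diff_left
          inner_diff_right nn inner_commute algebra_simps power2_eq_square)
    finally show ?thesis by simp
  qed
  let ?s = "(q - c) \<bullet> n" let ?D = "(norm (q - c))^2"
  show ?thesis
  proof (rule ccontr)
    assume "\<not> ?thesis"
    then have big: "?D < ?s * (2*R)" by simp
    have D0: "0 \<le> ?D" by simp
    have spos: "?s > 0"
    proof (rule ccontr)
      assume "\<not> ?s > 0"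
      then have "?s * (2*R) \<le> 0" using R_pos by (simp add: mult_nonpos_nonneg)
      then show False using big D0 by linarith
    qed
    define t where "t = (?D / (2 * ?s) + R) / 2"
    have q1: "?D / (2 * ?s) < R" using big spos by (simp add: divide_less_eq mult.commute)
    have q2: "0 \<le> ?D / (2 * ?s)" using spos by simp
    have tR: "0 \<le> t" "t < R" using q1 q2 unfolding t_def by auto
    have "2 * t * ?s = ?D / 2 + R * ?s" unfolding t_def using spos by (simp add: field_simps)
    also have "\<dots> > ?D"
    proof -
      have "?s * (2*R) = 2 * (R * ?s)" by simp
      then show ?thesis using big by linarith
    qed
    finally show False using key[OF tR] by simp
  qed
qed

definition NP :: "'a \<Rightarrow> 'a \<Rightarrow> bool" where
  "NP c n \<longleftrightarrow> c \<in> A \<and> norm n = 1 \<and> (\<forall>q\<in>A. (q - c) \<bullet> n * (2*R) \<le> (norm (q - c))^2)"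

lemma NP_np:
  assumes yU: "infdist y A < R" and yA: "y \<notin> A"
  shows "NP (np y) ((1 / norm (y - np y)) *\<^sub>R (y - np y))"
proof -
  define c where "c = np y"
  define \<rho> where "\<rho> = norm (y - c)"
  define n where "n = (1/\<rho>) *\<^sub>R (y - c)"
  have cA: "c \<in> A" using np(1)[OF yU] unfolding c_def .
  have rpos: "\<rho> > 0" using cA yA unfolding \<rho>_def by auto
  have rR: "\<rho> < R" using dist_np[OF yU] yU unfolding \<rho>_def c_def by (simp add: dist_norm)
  have nn: "norm n = 1" using rpos unfolding n_def \<rho>_def by simp
  have yeq: "c + \<rho> *\<^sub>R n = y" using rpos unfolding n_def by simp
  have h: "np (c + \<rho> *\<^sub>R n) = c" using yeq unfolding c_def by simp
  show ?thesis
    unfolding NP_def c_def[symmetric] \<rho>_def[symmetric] n_def[symmetric]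
    using cA nn normal_ineq[OF cA nn rpos rR h] by blast
qed

lemma NP_tan:
  assumes x: "x \<in> A" and v: "v \<in> Tan A x" "norm v = 1" and eta: "\<eta> > 0"
  shows "\<exists>\<gamma>>0. \<forall>c n. NP c n \<and> dist c x < \<gamma> \<longrightarrow> v \<bullet> n \<le> \<eta>"
proof -
  define e where "e = min \<eta> 1"
  have e: "e > 0" "e \<le> 1" "e \<le> \<eta>" using eta unfolding e_def by auto
  have "v \<noteq> 0" using v(2) by auto
  then obtain xs r where xs: "\<forall>i. xs i \<in> A \<and> xs i \<noteq> x" "xs \<longlonglongrightarrow> x" "\<forall>i. r i > 0"
      "(\<lambda>i. r i *\<^sub>R (xs i - x)) \<longlonglongrightarrow> v"
    using v(1) unfolding Tan_def by auto
  have ev1: "eventually (\<lambda>i. dist (r i *\<^sub>R (xs i - x)) v < e/4) sequentially"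
    using xs(4)[unfolded tendsto_iff, rule_format, of "e/4"] e by simp
  have ev2: "eventually (\<lambda>i. dist (xs i) x < R*e/16) sequentially"
    using xs(2)[unfolded tendsto_iff, rule_format, of "R*e/16"] e R_pos by simp
  obtain i where i1: "dist (r i *\<^sub>R (xs i - x)) v < e/4" and i2: "dist (xs i) x < R*e/16"
    using eventually_happens[OF eventually_conj[OF ev1 ev2]] by auto
  define s where "s = norm (xs i - x)"
  define w where "w = r i *\<^sub>R (xs i - x)"
  have spos: "s > 0" using xs(1) unfolding s_def by auto
  have sR: "s < R*e/16" using i2 unfolding s_def by (simp add: dist_norm)
  have ri: "r i > 0" using xs(3) by simp
  have wv: "norm (w - v) < e/4" using i1 unfolding w_def by (simp add: dist_norm)
  have nw: "norm w \<le> 1 + e/4"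
    using norm_triangle_ineq[of "w - v" v] wv v(2) by simp
  have rs: "r i * s = norm w" using ri unfolding w_def s_def by simp
  define \<gamma> where "\<gamma> = s * e / 8"
  have gpos: "\<gamma> > 0" using spos e unfolding \<gamma>_def by simp
  show ?thesis
  proof (intro exI[of _ \<gamma>] conjI allI impI)
    show "\<gamma> > 0" by (rule gpos)
    fix c n assume cn: "NP c n \<and> dist c x < \<gamma>"
    have cA: "c \<in> A" and nn: "norm n = 1"
      and ni: "(xs i - c) \<bullet> n * (2*R) \<le> (norm (xs i - c))^2"
      using cn xs(1) unfolding NP_def by auto
    have cx: "norm (c - x) < \<gamma>" using cn by (simp add: dist_norm)
    have "norm (xs i - c) \<le> norm (xs i - x) + norm (x - c)"
      by (metis norm_triangle_ineq diff_add_cancel add_diff_eq)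
    also have "\<dots> \<le> 2 * s"
    proof -
      have "s * e \<le> s" using e spos by (simp add: mult_left_le_one_le)
      moreover have "norm (x - c) < s*e/8" using cx unfolding \<gamma>_def by (simp add: norm_minus_commute)
      ultimately show ?thesis unfolding s_def using norm_ge_zero[of "x - c"] by linarith
    qed
    finally have xc: "norm (xs i - c) \<le> 2 * s" .
    have "(norm (xs i - c))^2 \<le> (2 * s) ^ 2" by (rule power_mono[OF xc norm_ge_zero])
    then have t1: "(xs i - c) \<bullet> n \<le> 2 * s^2 / R" using ni R_pos
      by (simp add: pos_le_divide_eq power_mult_distrib)
    have t2: "(c - x) \<bullet> n \<le> \<gamma>"
      using norm_cauchy_schwarz[of "c - x" n] nn cx by simp
    have "(xs i - x) \<bullet> n = (xs i - c) \<bullet> n + (c - x) \<bullet> n" by (simp add: inner_diff_left)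
    also have "\<dots> \<le> 2 * s^2 / R + \<gamma>" using t1 t2 by simp
    also have "\<dots> = s * (2 * s / R + e/8)" unfolding \<gamma>_def by (simp add: field_simps power2_eq_square)
    finally have t3: "(xs i - x) \<bullet> n \<le> s * (2 * s / R + e/8)" .
    have "w \<bullet> n = r i * ((xs i - x) \<bullet> n)" unfolding w_def by simp
    also have "\<dots> \<le> r i * (s * (2 * s / R + e/8))" using t3 ri by (simp add: mult_left_mono)
    also have "\<dots> = norm w * (2 * s / R + e/8)" using rs by simp
    also have "\<dots> \<le> 2 * (2 * s / R + e/8)"
      using nw e spos R_pos by (intro mult_right_mono) auto
    also have "\<dots> \<le> e/2"
    proof -
      have "2 * s / R < e/8" using sR R_pos by (simp add: divide_less_eq field_simps)
      then show ?thesis by simp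
    qed
    finally have wn: "w \<bullet> n \<le> e/2" .
    have "v \<bullet> n = w \<bullet> n + (v - w) \<bullet> n" by (simp add: inner_diff_left)
    also have "(v - w) \<bullet> n \<le> norm (v - w)" using norm_cauchy_schwarz[of "v - w" n] nn by simp
    finally show "v \<bullet> n \<le> \<eta>" using wn wv e by (simp add: norm_minus_commute)
  qed
qed

lemma realize:
  assumes a: "a \<in> A" and h: "0 < h" "h < R" and nv: "norm v = 1" and eta: "0 \<le> \<eta>"
    and sc: "\<forall>c n. NP c n \<and> dist c x < \<gamma> \<longrightarrow> v \<bullet> n \<le> \<eta>" and close: "dist a x + 3*h < \<gamma>"
  shows "\<exists>z\<in>A. norm (z - (a + h *\<^sub>R v)) \<le> h * (2*h/R + \<eta>)"
proof (cases "a + h *\<^sub>R v \<in> A")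
  case True then show ?thesis using h eta R_pos by (intro bexI[of _ "a + h *\<^sub>R v"]) auto
next
  case False
  define p where "p = a + h *\<^sub>R v"
  have pA: "p \<notin> A" using False unfolding p_def .
  have pa: "dist p a = h" unfolding p_def using nv h by (simp add: dist_norm)
  have pU: "infdist p A < R" using infdist_le[OF a, of p] pa h by simp
  define c where "c = np p"
  define \<rho> where "\<rho> = norm (p - c)"
  define n where "n = (1/\<rho>) *\<^sub>R (p - c)"
  have cA: "c \<in> A" using np(1)[OF pU] unfolding c_def .
  have NPc: "NP c n" using NP_np[OF pU pA] unfolding c_def n_def \<rho>_def .
  have rho_le: "\<rho> \<le> h"
    using dist_np[OF pU] infdist_le[OF a, of p] pa unfolding \<rho>_def c_def by (simp add: dist_norm)
  have rpos: "\<rho> > 0" using pA cA unfolding \<rho>_def by auto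
  have "dist c x \<le> dist c p + dist p a + dist a x"
    by (metis dist_triangle add_mono order_trans dist_triangle add_le_cancel_right)
  also have "\<dots> \<le> \<rho> + h + dist a x" using pa unfolding \<rho>_def by (simp add: dist_norm norm_minus_commute)
  finally have dcx: "dist c x < \<gamma>" using rho_le close h by simp
  have vn: "v \<bullet> n \<le> \<eta>" using sc NPc dcx by blast
  have "\<rho> = (p - c) \<bullet> n"
    using rpos unfolding n_def \<rho>_def by (simp add: power2_norm_eq_inner[symmetric] power2_eq_square)
  also have "(p - c) \<bullet> n = (a - c) \<bullet> n + h * (v \<bullet> n)"
    unfolding p_def by (simp add: algebra_simps inner_add_left inner_diff_left)
  finally have rho_eq: "\<rho> = (a - c) \<bullet> n + h * (v \<bullet> n)" .
  have "norm (a - c) \<le> norm (a - p) + norm (p - c)"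
    by (metis norm_triangle_ineq diff_add_cancel add_diff_eq)
  also have "\<dots> \<le> 2*h" using pa rho_le unfolding \<rho>_def by (simp add: dist_norm norm_minus_commute)
  finally have ac: "norm (a - c) \<le> 2*h" .
  have "(a - c) \<bullet> n * (2*R) \<le> (norm (a - c))^2" using NPc a unfolding NP_def by auto
  also have "\<dots> \<le> (2*h)^2" by (rule power_mono[OF ac norm_ge_zero])
  finally have "(a - c) \<bullet> n \<le> 2*h^2/R" using R_pos
    by (simp add: pos_le_divide_eq power_mult_distrib mult.commute)
  moreover have "h * (v \<bullet> n) \<le> h * \<eta>" using vn h by (simp add: mult_left_mono)
  ultimately have "\<rho> \<le> h * (2*h/R + \<eta>)" using rho_eq by (simp add: field_simps power2_eq_square)
  then show ?thesis using cA unfolding \<rho>_def by (intro bexI[of _ c]) (auto simp: norm_minus_commute p_def)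
qed

end



lemma diam_hull_le:
  fixes S :: "'a::euclidean_space set"
  assumes S: "\<forall>y\<in>S. dist c y \<le> r" and r: "0 \<le> r"
  shows "diameter (convex hull S) \<le> 2*r"
proof -
  have sub: "convex hull S \<subseteq> cball c r"
    by (rule hull_minimal) (use S in \<open>auto simp: convex_cball\<close>)
  show ?thesis
  proof (rule diameter_le)
    show "convex hull S \<noteq> {} \<or> 0 \<le> 2*r" using r by simp
    fix x y assume "x \<in> convex hull S" "y \<in> convex hull S"
    then have xy: "dist c x \<le> r" "dist c y \<le> r" using sub by auto
    have "dist x y \<le> dist c x + dist c y" using dist_triangle[of x y c] by (simp add: dist_commute)
    then have "dist x y \<le> 2*r" using xy by linarith
    then show "norm (x - y) \<le> 2*r" by (simp add: dist_norm)
  qed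
qed

lemma diam_hull_ge:
  fixes S :: "'a::euclidean_space set"
  assumes "finite S" "x \<in> S" "y \<in> S"
  shows "dist x y \<le> diameter (convex hull S)"
  by (rule diameter_bounded_bound) (use assms in \<open>auto intro: finite_imp_bounded_convex_hull hull_inc\<close>)

theorem lemma3p9:
  fixes A :: "'a::euclidean_space set" and x :: 'a and v :: "nat \<Rightarrow> 'a"
    and k :: nat and \<theta> :: real
  assumes "DIM('a) \<ge> 3" and "2 \<le> k" and "k \<le> DIM('a) - 1" and "\<theta> > 0"
    and "positive_reach A" and "x \<in> A"
    and "\<forall>i\<in>{1..k}. v i \<in> Tan A x \<and> norm (v i) = 1"
    and "Theta k (\<lambda>i. if i = 0 then 0 else v i) \<ge> \<theta>"
  shows "\<exists>\<delta>>0. \<forall>a b. a \<in> ball x \<delta> \<inter> A \<and> b \<in> ball x \<delta> \<inter> A \<and> a \<noteq> b \<longrightarrow>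
           related A k (\<theta> / (2 ^ (k + 2) * real k)) a b"
proof -
  obtain R where R: "R > 0" "\<forall>y. infdist y A < R \<longrightarrow> (\<exists>!p. p \<in> A \<and> (\<forall>q\<in>A. dist y p \<le> dist y q))"
    using assms(5) unfolding positive_reach_def by blast
  interpret preach A R using R by unfold_locales auto
  have k1: "1 \<le> k" using assms(2) by simp
  have kpos: "real k > 0" using k1 by simp
  define V where "V j = v (Suc j)" for j
  have Vn: "\<forall>i<k. norm (V i) = 1" and Vt: "\<forall>i<k. V i \<in> Tan A x"
    using assms(7) unfolding V_def by auto
  define P0 where "P0 = (\<lambda>i. if i = 0 then 0 else v i)"
  define gV where "gV = gram k V"
  have vol0: "simplex_vol k P0 = sqrt gV / fact k"
    unfolding simplex_vol_def gram_def P0_def V_def gV_def by simp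
  define D0 where "D0 = simplex_diam k P0"
  have D0: "1 \<le> D0"
  proof -
    have "dist (P0 0) (P0 1) \<le> diameter (convex hull (P0 ` {0..k}))"
      by (rule diam_hull_ge) (use assms(2) in auto)
    moreover have "dist (P0 0) (P0 1) = 1" using assms(7) assms(2) unfolding P0_def by auto
    ultimately show ?thesis unfolding D0_def simplex_diam_def by simp
  qed
  have gV0: "0 \<le> gV" unfolding gV_def by (rule gram_nonneg)
  have th: "\<theta> * fact k \<le> sqrt gV"
  proof -
    have vnn: "0 \<le> simplex_vol k P0" unfolding vol0 using gV0 by simp
    have Dk: "1 \<le> D0^k" using D0 by (simp add: one_le_power)
    have "\<theta> \<le> simplex_vol k P0 / D0^k" using assms(8) unfolding Theta_def D0_def P0_def by simp
    also have "\<dots> \<le> simplex_vol k P0"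
    proof -
      have "simplex_vol k P0 * 1 \<le> simplex_vol k P0 * D0^k" using Dk vnn by (rule mult_left_mono)
      then show ?thesis using Dk by (simp add: divide_le_eq)
    qed
    finally have "\<theta> \<le> sqrt gV / fact k" using vol0 by simp
    then show ?thesis by (simp add: pos_le_divide_eq)
  qed
  have gVpos: "gV > 0"
  proof -
    have "0 < \<theta> * fact k" using assms(4) by simp
    then have "0 < sqrt gV" using th by linarith
    then show ?thesis by (simp add: real_sqrt_gt_0_iff)
  qed
  define \<epsilon>2 where "\<epsilon>2 = 3 * gV / (4 * (real k)^2 * fact k * real k * 4^k)"
  define \<epsilon> where "\<epsilon> = min 1 (min (ln 2 / real k) \<epsilon>2)"
  have e2pos: "\<epsilon>2 > 0" unfolding \<epsilon>2_def using gVpos kpos by simp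
  have ln2: "ln 2 > (0::real)" by simp
  have eps: "0 < \<epsilon>" "\<epsilon> \<le> 1" "\<epsilon> \<le> ln 2 / real k" "\<epsilon> \<le> \<epsilon>2"
    unfolding \<epsilon>_def using e2pos ln2 kpos by auto
  have pw: "(1 + \<epsilon>)^k \<le> 2"
  proof -
    have "(1 + \<epsilon>)^k \<le> (exp \<epsilon>)^k" using eps by (intro power_mono exp_ge_add_one_self) auto
    also have "\<dots> = exp (real k * \<epsilon>)" by (rule exp_of_nat_mult[symmetric])
    also have "\<dots> \<le> exp (ln 2)"
    proof -
      have "real k * \<epsilon> \<le> ln 2" using eps(3) kpos by (simp add: le_divide_eq mult.commute)
      then show ?thesis by (simp only: exp_le_cancel_iff)
    qed
    also have "\<dots> = 2" by simp
    finally show ?thesis .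
  qed
  define \<eta> where "\<eta> = \<epsilon>/2"
  have eta: "\<eta> > 0" unfolding \<eta>_def using eps by simp
  have "\<forall>j<k. \<exists>\<gamma>>0. \<forall>c n. NP c n \<and> dist c x < \<gamma> \<longrightarrow> V j \<bullet> n \<le> \<eta>"
    using NP_tan[OF assms(6) _ _ eta] Vt Vn by blast
  then obtain gf where gf: "\<forall>j<k. gf j > 0 \<and> (\<forall>c n. NP c n \<and> dist c x < gf j \<longrightarrow> V j \<bullet> n \<le> \<eta>)"
    by metis
  define \<gamma> where "\<gamma> = Min (gf ` {..<k})"
  have fin: "finite (gf ` {..<k})" and ne: "gf ` {..<k} \<noteq> {}" using k1 by (auto simp: lessThan_empty_iff)
  have gpos: "\<gamma> > 0" unfolding \<gamma>_def using Min_gr_iff[OF fin ne] gf by auto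
  have gle: "\<forall>j<k. \<gamma> \<le> gf j" unfolding \<gamma>_def using Min_le[OF fin] by auto
  define \<delta> where "\<delta> = min (\<gamma>/7) (min (\<epsilon>*R/8) (R/4))"
  have dl1: "\<delta> > 0" unfolding \<delta>_def using gpos eps R by auto
  have dl2: "\<delta> \<le> \<gamma>/7" unfolding \<delta>_def by (rule min.cobounded1)
  have dl3: "\<delta> \<le> \<epsilon>*R/8" unfolding \<delta>_def by (metis min.cobounded1 min.cobounded2 order_trans)
  have dl4: "\<delta> \<le> R/4" unfolding \<delta>_def by (metis min.cobounded2 order_trans)
  note dl = dl1 dl2 dl3 dl4
  show ?thesis
  proof (intro exI[of _ \<delta>] conjI allI impI)
    show "\<delta> > 0" by (rule dl(1))
    fix a b assume ab: "a \<in> ball x \<delta> \<inter> A \<and> b \<in> ball x \<delta> \<inter> A \<and> a \<noteq> b"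
    then have aA: "a \<in> A" and bA: "b \<in> A" and dax: "dist x a < \<delta>" and dbx: "dist x b < \<delta>"
      and abne: "a \<noteq> b" by auto
    define h where "h = norm (b - a)"
    have hpos: "h > 0" using abne unfolding h_def by simp
    have h2d: "h < 2*\<delta>"
    proof -
      have "dist b a \<le> dist x b + dist x a" using dist_triangle[of b a x] by (simp add: dist_commute)
      then have "dist b a < 2*\<delta>" using dax dbx by linarith
      then show ?thesis unfolding h_def by (simp add: dist_norm)
    qed
    have hR: "h < R" using h2d dl by simp
    have close: "dist a x + 3*h < \<gamma>" using dax h2d dl by (simp add: dist_commute)
    have errb: "h * (2*h/R + \<eta>) \<le> \<epsilon> * h"
    proof -
      have "2*h/R \<le> \<epsilon>/2" using h2d dl R(1) by (simp add: divide_le_eq)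
      then have "2*h/R + \<eta> \<le> \<epsilon>" unfolding \<eta>_def by simp
      then show ?thesis using hpos by (simp add: mult.commute mult_left_mono)
    qed
    have "\<forall>j<k. \<exists>z\<in>A. norm (z - (a + h *\<^sub>R V j)) \<le> \<epsilon> * h"
    proof (intro allI impI)
      fix j assume j: "j < k"
      have sc: "\<forall>c n. NP c n \<and> dist c x < \<gamma> \<longrightarrow> V j \<bullet> n \<le> \<eta>" using gf gle j by force
      obtain z where "z \<in> A" "norm (z - (a + h *\<^sub>R V j)) \<le> h * (2*h/R + \<eta>)"
        using realize[OF aA hpos hR _ _ sc close] Vn j eta by auto
      then show "\<exists>z\<in>A. norm (z - (a + h *\<^sub>R V j)) \<le> \<epsilon> * h" using errb by force
    qed
    then obtain Z where Z: "\<forall>j<k. Z j \<in> A \<and> norm (Z j - (a + h *\<^sub>R V j)) \<le> \<epsilon> * h"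
      by metis
    define e where "e = (1/h) *\<^sub>R (b - a)"
    have ne: "norm e = 1" unfolding e_def h_def using abne by simp
    have he: "h *\<^sub>R e = b - a" unfolding e_def using hpos by simp
    obtain m where m: "m < k" "gram k V / (real k)^2 \<le> gram k (\<lambda>i. if i = 0 then e else V (insert_index m (i - 1)))"
      using gram_lower[OF k1 Vn ne] by blast
    define C where "C = (\<lambda>i. if i = 0 then e else V (insert_index m (i - 1)))"
    define z where "z = (\<lambda>i. Z (insert_index m (i - 1)))"
    define P where "P = (\<lambda>i. if i = 0 then a else if i = 1 then b else z (i - 1))"
    have idx: "insert_index m (i - 1) < k" if "1 \<le> i" "i < k" for i
      using insert_index_lt[OF m(1), of "i - 1"] that by simp
    have zA: "\<forall>i\<in>{1..k-1}. z i \<in> A" unfolding z_def using Z idx by auto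
    define u where "u = (\<lambda>i. P (Suc i) - P 0)"
    define w where "w = (\<lambda>i. h *\<^sub>R C i)"
    have Cn: "norm (C i) = 1" if "i < k" for i
      using ne Vn idx[of i] that unfolding C_def by (cases "i = 0") auto
    have uw: "\<forall>i<k. norm (u i) \<le> (1+\<epsilon>)*h \<and> norm (w i) \<le> (1+\<epsilon>)*h \<and> norm (u i - w i) \<le> \<epsilon>*h"
    proof (intro allI impI)
      fix i assume i: "i < k"
      have nw: "norm (w i) = h" unfolding w_def using Cn[OF i] hpos by simp
      have d: "norm (u i - w i) \<le> \<epsilon>*h"
      proof (cases "i = 0")
        case True
        then have "u i - w i = 0" unfolding u_def w_def P_def C_def using he by simp
        then show ?thesis using eps hpos by simp
      next
        case False
        define j where "j = insert_index m (i - 1)"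
        have j: "j < k" unfolding j_def using idx[of i] i False by simp
        have "u i - w i = Z j - (a + h *\<^sub>R V j)"
          unfolding u_def w_def P_def C_def z_def j_def using False by simp
        then show ?thesis using Z j by simp
      qed
      have "norm (u i) \<le> norm (w i) + norm (u i - w i)"
        by (metis norm_triangle_ineq add_diff_cancel_left' add.commute diff_add_cancel)
      then have "norm (u i) \<le> (1+\<epsilon>)*h" using nw d by (simp add: algebra_simps)
      then show "norm (u i) \<le> (1+\<epsilon>)*h \<and> norm (w i) \<le> (1+\<epsilon>)*h \<and> norm (u i - w i) \<le> \<epsilon>*h"
        using nw d eps hpos by (simp add: algebra_simps)
    qed
    have pert: "\<bar>gram k u - gram k w\<bar> \<le> fact k * (real k * (((1+\<epsilon>)*h)^2)^(k-1) * (2*((1+\<epsilon>)*h)*(\<epsilon>*h)))"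
      by (rule gram_perturb) (use uw eps hpos in auto)
    have bound: "fact k * (real k * (((1+\<epsilon>)*h)^2)^(k-1) * (2*((1+\<epsilon>)*h)*(\<epsilon>*h)))
        \<le> 3/4 * ((h^2)^k * (gV / (real k)^2))"
    proof -
      have b1: "(((1+\<epsilon>)*h)^2)^(k-1) \<le> (4*h^2)^(k-1)"
      proof (rule power_mono)
        have "(1+\<epsilon>)*h \<le> 2*h" using eps hpos by simp
        then have "((1+\<epsilon>)*h)^2 \<le> (2*h)^2" using eps hpos by (intro power_mono) auto
        then show "((1+\<epsilon>)*h)^2 \<le> 4*h^2" by (simp add: power_mult_distrib)
      qed simp
      have b2: "2*((1+\<epsilon>)*h)*(\<epsilon>*h) \<le> 4*h^2*\<epsilon>"
      proof -
        have "2*((1+\<epsilon>)*h)*(\<epsilon>*h) = 2*(1+\<epsilon>)*(\<epsilon>*h^2)" by (simp add: power2_eq_square)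
        also have "\<dots> \<le> 2*2*(\<epsilon>*h^2)" using eps hpos by (intro mult_right_mono) auto
        finally show ?thesis by simp
      qed
      have "fact k * (real k * (((1+\<epsilon>)*h)^2)^(k-1) * (2*((1+\<epsilon>)*h)*(\<epsilon>*h)))
          \<le> fact k * (real k * (4*h^2)^(k-1) * (4*h^2*\<epsilon>))"
      proof -
        have "(((1+\<epsilon>)*h)^2)^(k-1) * (2*((1+\<epsilon>)*h)*(\<epsilon>*h)) \<le> (4*h^2)^(k-1) * (4*h^2*\<epsilon>)"
          by (rule mult_mono[OF b1 b2]) (use eps hpos in auto)
        then have "real k * (((1+\<epsilon>)*h)^2)^(k-1) * (2*((1+\<epsilon>)*h)*(\<epsilon>*h)) \<le> real k * (4*h^2)^(k-1) * (4*h^2*\<epsilon>)"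
          by (simp add: mult.assoc mult_left_mono)
        then show ?thesis by (simp add: mult_left_mono)
      qed
      also have "\<dots> = fact k * real k * \<epsilon> * ((4*h^2)^(k-1) * (4*h^2))" by (simp add: algebra_simps)
      also have "(4*h^2)^(k-1) * (4*h^2) = (4*h^2)^k"
        using k1 by (metis Suc_diff_le diff_Suc_1 power_Suc2)
      also have "fact k * real k * \<epsilon> * (4*h^2)^k = \<epsilon> * (fact k * real k * 4^k) * (h^2)^k"
        by (simp add: power_mult_distrib algebra_simps)
      also have "\<dots> \<le> \<epsilon>2 * (fact k * real k * 4^k) * (h^2)^k"
        using eps hpos by (intro mult_right_mono) auto
      also have "\<epsilon>2 * (fact k * real k * 4^k) = 3/4 * (gV / (real k)^2)"
        unfolding \<epsilon>2_def using kpos by (simp add: field_simps)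
      finally show ?thesis by (simp add: algebra_simps)
    qed
    have gw: "gram k w = (h^2)^k * gram k C" unfolding w_def by (rule gram_scale)
    have gC: "gV / (real k)^2 \<le> gram k C" using m(2) unfolding C_def gV_def .
    define X where "X = (h^2)^k * (gV / (real k)^2)"
    have X0: "0 \<le> X" unfolding X_def using gV0 by simp
    have gwX: "X \<le> gram k w" unfolding gw X_def by (rule mult_left_mono[OF gC]) simp
    have gu: "X / 4 \<le> gram k u"
    proof -
      have "-(gram k u - gram k w) \<le> 3/4 * X"
        using abs_le_D2[OF pert] bound unfolding X_def by linarith
      then show ?thesis using gwX by linarith
    qed
    have vol: "simplex_vol k P = sqrt (gram k u) / fact k"
      unfolding simplex_vol_def gram_def u_def by simp
    have sq: "h^k * sqrt gV / (2 * real k) \<le> sqrt (gram k u)"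
    proof (rule real_le_rsqrt)
      have "(h^k * sqrt gV / (2 * real k))^2 = (h^2)^k * gV / (4 * (real k)^2)"
        using gV0 by (simp add: power_mult_distrib power_divide power_mult[symmetric] mult.commute)
      also have "\<dots> = X / 4" unfolding X_def by simp
      finally show "(h^k * sqrt gV / (2 * real k))^2 \<le> gram k u" using gu by simp
    qed
    have volb: "h^k * \<theta> / (2 * real k) \<le> simplex_vol k P"
    proof -
      have "h^k * \<theta> / (2 * real k) = h^k * (\<theta> * fact k) / (2 * real k) / fact k" by simp
      also have "\<dots> \<le> h^k * sqrt gV / (2 * real k) / fact k"
        using th hpos kpos by (intro divide_right_mono mult_left_mono) auto
      also have "\<dots> \<le> sqrt (gram k u) / fact k" using sq by (intro divide_right_mono) auto
      finally show ?thesis using vol by simp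
    qed
    have dP: "\<forall>y\<in>P ` {0..k}. dist a y \<le> (1+\<epsilon>)*h"
    proof
      fix y assume "y \<in> P ` {0..k}"
      then obtain i where i: "i \<le> k" "y = P i" by auto
      show "dist a y \<le> (1+\<epsilon>)*h"
      proof (cases "i = 0 \<or> i = 1")
        case True
        then show ?thesis using i eps hpos unfolding P_def h_def by (auto simp: dist_norm norm_minus_commute)
      next
        case False
        define j where "j = insert_index m (i - 2)"
        have "i - 2 < k - 1" using i False assms(2) by linarith
        then have j: "j < k" unfolding j_def using insert_index_lt[OF m(1), of "i - 2"] by simp
        have yZ: "y = Z j" using i False unfolding P_def z_def j_def by (simp add: numeral_2_eq_2)
        have "norm (Z j - a) \<le> norm (Z j - (a + h *\<^sub>R V j)) + norm (h *\<^sub>R V j)"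
          by (metis norm_triangle_ineq add_diff_cancel_left' add.commute diff_add_cancel diff_diff_eq)
        also have "\<dots> \<le> \<epsilon>*h + h" using Z j Vn hpos by simp
        finally show ?thesis using yZ by (simp add: dist_norm norm_minus_commute algebra_simps)
      qed
    qed
    have diam_le: "simplex_diam k P \<le> 2*((1+\<epsilon>)*h)"
      unfolding simplex_diam_def by (rule diam_hull_le[OF dP]) (use eps hpos in simp)
    have diam_ge: "h \<le> simplex_diam k P"
    proof -
      have "dist (P 0) (P 1) \<le> diameter (convex hull (P ` {0..k}))"
        by (rule diam_hull_ge) (use assms(2) in auto)
      then show ?thesis unfolding simplex_diam_def P_def h_def by (simp add: dist_norm norm_minus_commute)
    qed
    have dpos: "simplex_diam k P > 0" using diam_ge hpos by simp
    have dk: "simplex_diam k P ^ k \<le> 2^(k+1) * h^k"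
    proof -
      have "simplex_diam k P ^ k \<le> (2*((1+\<epsilon>)*h))^k" using diam_le dpos by (intro power_mono) auto
      also have "\<dots> = 2^k * (1+\<epsilon>)^k * h^k" by (simp add: power_mult_distrib)
      also have "\<dots> \<le> 2^k * 2 * h^k" using pw hpos by (intro mult_right_mono mult_left_mono) auto
      finally show ?thesis by simp
    qed
    have Th: "\<theta> / (2 ^ (k + 2) * real k) \<le> Theta k P"
    proof -
      have "(h^k * \<theta> / (2 * real k)) / (2^(k+1) * h^k) \<le> simplex_vol k P / simplex_diam k P ^ k"
      proof (rule frac_le)
        have "0 \<le> h^k * \<theta> / (2 * real k)" using hpos assms(4) kpos by simp
        then show "0 \<le> simplex_vol k P" using volb by linarith
        show "h^k * \<theta> / (2 * real k) \<le> simplex_vol k P" by (rule volb)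
        show "0 < simplex_diam k P ^ k" using dpos by simp
        show "simplex_diam k P ^ k \<le> 2^(k+1) * h^k" by (rule dk)
      qed
      moreover have "(h^k * \<theta> / (2 * real k)) / (2^(k+1) * h^k) = \<theta> / (2 ^ (k + 2) * real k)"
        using hpos kpos by (simp add: field_simps)
      ultimately show ?thesis unfolding Theta_def by simp
    qed
    show "related A k (\<theta> / (2 ^ (k + 2) * real k)) a b"
      unfolding related_def
      using abne zA dpos Th unfolding P_def by blast
  qed
qed


end
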